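(* Let $X\sim N(-\mu,\sigma^2)$ with $\mu\ge0$ and $\sigma>0$. Then for every $0\le\epsilon\le1$, $$\mathbb P\Big(0\le X\le\epsilon\big(\sigma\wedge\tfrac{\sigma^2}{\mu}\big)\Big)\ge\frac{\epsilon}{5}\,\mathbb P(X\ge0),$$ with the convention $\sigma^2/0=\infty$. *)

theory Defs
  imports "HOL-Probability.Probability"
begin

definition normal_thr :: "real \<Rightarrow> real \<Rightarrow> real" where
  "normal_thr \<mu> \<sigma> = (if \<mu> = 0 then \<sigma> else min \<sigma> (\<sigma>\<^sup>2 / \<mu>))"

end

theory Submission
  imports Defs
begin

lemma exp_half_le: "exp (1/2::real) \<le> 5/3"
proof -
  have "exp (1/2::real) ^ 2 = exp 1" by (simp add: exp_double[symmetric])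
  also have "\<dots> < 25/9" using e_less_272 by simp
  finally have h: "exp (1/2::real) ^ 2 < 25/9" .
  show ?thesis
  proof (rule ccontr)
    assume "\<not> ?thesis"
    hence "5/3 < exp (1/2::real)" by simp
    hence "(5/3)*(5/3) < exp (1/2::real) * exp (1/2)" by (intro mult_strict_mono) auto
    with h show False by (simp add: power2_eq_square)
  qed
qed

lemma sq_le_exp: assumes "0 \<le> y" "y \<le> 2" shows "(1 - y/2)^2 \<le> exp (-y::real)"
proof -
  have "1 - y/2 \<le> exp (-y/2)" using exp_ge_add_one_self[of "-y/2"] by simp
  hence "(1 - y/2)^2 \<le> exp (-y/2)^2" using assms by (intro power_mono) auto
  also have "\<dots> = exp (-y)" by (simp add: exp_double[symmetric])
  finally show ?thesis .
qed

lemma nd_split: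
  assumes "\<sigma> > 0"
  shows "normal_density (- \<mu>) \<sigma> x = normal_density (- \<mu>) \<sigma> 0 * exp (- (x^2 + 2*x*\<mu>)/(2*\<sigma>^2))"
  unfolding normal_density_def using assms
  by (simp add: exp_add[symmetric] power2_eq_square field_simps)

theorem claim3p3:
  fixes M :: "'a measure" and X :: "'a \<Rightarrow> real" and \<mu> \<sigma> \<epsilon> :: real
  assumes "prob_space M"
    and "distributed M lborel X (normal_density (- \<mu>) \<sigma>)"
    and "\<mu> \<ge> 0" and "\<sigma> > 0"
    and "0 \<le> \<epsilon>" and "\<epsilon> \<le> 1"
  shows "measure M {x \<in> space M. 0 \<le> X x \<and> X x \<le> \<epsilon> * normal_thr \<mu> \<sigma>}
           \<ge> \<epsilon> / 5 * measure M {x \<in> space M. X x \<ge> 0}"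
proof -
  interpret P: prob_space M by fact
  define t where "t = normal_thr \<mu> \<sigma>"
  define D where "D = normal_density (- \<mu>) \<sigma>"
  define c where "c = D 0"
  define s where "s = \<epsilon> * t"
  have c0: "c > 0" unfolding c_def D_def normal_density_def using assms by auto
  have tcase: "t = \<sigma> \<or> (\<mu> > 0 \<and> t = \<sigma>^2/\<mu>)"
    unfolding t_def normal_thr_def using assms by (auto simp: min_def)
  have t0: "t > 0" using tcase assms by auto
  have tle: "t \<le> \<sigma>" unfolding t_def normal_thr_def by auto
  have mut: "\<mu> * t \<le> \<sigma>^2"
  proof (cases "\<mu> = 0")
    case False
    hence "t \<le> \<sigma>^2/\<mu>" unfolding t_def normal_thr_def by simp
    thus ?thesis using False assms by (simp add: field_simps)
  qed (simp)
  have Dsplit: "D x = c * exp (- (x^2 + 2*x*\<mu>)/(2*\<sigma>^2))" for x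
    unfolding D_def c_def using nd_split assms by blast
  have up: "D x \<le> c * exp (1/2) * exp (- x / t)" if "x \<ge> 0" for x
  proof -
    have Q: "- (x^2 + 2*x*\<mu>)/(2*\<sigma>^2) \<le> 1/2 - x/t"
      using tcase
    proof
      assume tt: "t = \<sigma>"
      have "- (x^2 + 2*x*\<mu>) \<le> \<sigma>^2 - 2*x*\<sigma>"
      proof -
        have e: "(x-\<sigma>)^2 = x^2 - 2*x*\<sigma> + \<sigma>^2" by (simp add: power2_eq_square algebra_simps)
        have "0 \<le> x*\<mu>" using that assms by simp
        thus ?thesis using e zero_le_power2[of "x-\<sigma>"] by linarith
      qed
      hence "- (x^2 + 2*x*\<mu>)/(2*\<sigma>^2) \<le> (\<sigma>^2 - 2*x*\<sigma>)/(2*\<sigma>^2)"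
        by (intro divide_right_mono) auto
      also have "(\<sigma>^2 - 2*x*\<sigma>)/(2*\<sigma>^2) = 1/2 - x/t" using tt assms by (simp add: field_simps power2_eq_square)
      finally show ?thesis .
    next
      assume tt: "\<mu> > 0 \<and> t = \<sigma>^2/\<mu>"
      have "- (x^2 + 2*x*\<mu>) \<le> \<sigma>^2 - 2*x*\<mu>"
        using that assms zero_le_power2[of x] zero_le_power2[of \<sigma>] by linarith
      hence "- (x^2 + 2*x*\<mu>)/(2*\<sigma>^2) \<le> (\<sigma>^2 - 2*x*\<mu>)/(2*\<sigma>^2)"
        by (intro divide_right_mono) auto
      also have "(\<sigma>^2 - 2*x*\<mu>)/(2*\<sigma>^2) = 1/2 - x/t" using tt assms by (simp add: field_simps power2_eq_square)
      finally show ?thesis .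
    qed
    have "D x = c * exp (- (x^2 + 2*x*\<mu>)/(2*\<sigma>^2))" by (rule Dsplit)
    also have "\<dots> \<le> c * exp (1/2 - x/t)" using Q c0 by (intro mult_left_mono) auto
    also have "\<dots> = c * exp (1/2) * exp (- x / t)" by (simp add: mult.assoc exp_add[symmetric])
    finally show ?thesis .
  qed
  have low: "c * (1 - 3*x/(4*t))^2 \<le> D x" if "0 \<le> x" "x \<le> t" for x
  proof -
    define g where "g = (x^2 + 2*x*\<mu>)/(2*\<sigma>^2)"
    have g0: "0 \<le> g" unfolding g_def using that assms by auto
    have xt: "x * t \<le> \<sigma>^2" using that tle t0 assms
      by (smt (verit, best) mult_mono power2_eq_square)
    have h1: "x * x * t \<le> x * \<sigma>^2" using xt that by (smt (verit) mult.assoc mult_left_mono)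
    have h2: "x * \<mu> * t \<le> x * \<sigma>^2" using mut that by (smt (verit) mult.assoc mult.commute mult_left_mono)
    have "g * (2*\<sigma>^2*t) = (x*x*t + 2*(x*\<mu>*t))"
      unfolding g_def using assms by (simp add: field_simps power2_eq_square)
    also have "\<dots> \<le> 3 * x * \<sigma>^2" using h1 h2 by linarith
    finally have "g * (2*\<sigma>^2*t) \<le> 3 * x * \<sigma>^2" .
    hence gle: "g \<le> 3*x/(2*t)" using assms t0 by (simp add: field_simps power2_eq_square)
    have a0: "0 \<le> 1 - 3*x/(4*t)" using that t0 by (simp add: field_simps)
    have "3*x/(2*t) \<le> 3/2" using that t0 by (simp add: field_simps)
    hence g2: "g \<le> 2" using gle by linarith
    have "(1 - 3*x/(4*t))^2 \<le> (1 - g/2)^2" using a0 gle by (intro power_mono) auto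
    also have "\<dots> \<le> exp (-g)" using g0 g2 by (rule sq_le_exp)
    finally have "c * (1 - 3*x/(4*t))^2 \<le> c * exp (-g)" using c0 by simp
    also have "\<dots> = D x" unfolding g_def Dsplit by (simp add: minus_divide_left)
    finally show ?thesis .
  qed
  have A1: "{x \<in> space M. 0 \<le> X x \<and> X x \<le> \<epsilon> * normal_thr \<mu> \<sigma>} = X -` {0..s} \<inter> space M"
    unfolding s_def t_def by auto
  have A2: "{x \<in> space M. X x \<ge> 0} = X -` {0..} \<inter> space M" by auto
  have E1: "emeasure M (X -` {0..s} \<inter> space M) = (\<integral>\<^sup>+x. ennreal (D x) * indicator {0..s} x \<partial>lborel)"
    using distributed_emeasure[OF assms(2)] unfolding D_def by simp
  have E2: "emeasure M (X -` {0..} \<inter> space M) = (\<integral>\<^sup>+x. ennreal (D x) * indicator {0..} x \<partial>lborel)"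
    using distributed_emeasure[OF assms(2)] unfolding D_def by simp
  have B2: "emeasure M (X -` {0..} \<inter> space M) \<le> ennreal (c * exp (1/2) * t)"
  proof -
    have "(\<integral>\<^sup>+x. ennreal (D x) * indicator {0..} x \<partial>lborel)
       \<le> (\<integral>\<^sup>+x. ennreal (c * exp (1/2) * t) * ennreal (exponential_density (1/t) x) \<partial>lborel)"
    proof (intro nn_integral_mono)
      fix x :: real
      show "ennreal (D x) * indicator {0..} x \<le> ennreal (c * exp (1/2) * t) * ennreal (exponential_density (1/t) x)"
      proof (cases "x \<ge> 0")
        case True
        have "D x \<le> (c * exp (1/2) * t) * (exponential_density (1/t) x)"
          using up[OF True] True t0 by (simp add: exponential_density_def field_simps)
        thus ?thesis using True c0 t0 by (simp add: ennreal_mult[symmetric] ennreal_leI)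
      qed simp
    qed
    also have "\<dots> = ennreal (c * exp (1/2) * t) * (\<integral>\<^sup>+x. ennreal (exponential_density (1/t) x) \<partial>lborel)"
      by (intro nn_integral_cmult) measurable
    also have "(\<integral>\<^sup>+x. ennreal (exponential_density (1/t) x) \<partial>lborel) = 1"
      using nn_integral_erlang_ith_moment[of "1/t" 0 0] t0 by simp
    finally show ?thesis using E2 by simp
  qed
  have B1: "ennreal (c * \<epsilon> * t / 3) \<le> emeasure M (X -` {0..s} \<inter> space M)"
  proof -
    define a where "a = 3/(4*t)"
    define F where "F = (\<lambda>x::real. c * (x - a*x^2 + a^2*x^3/3))"
    have s0: "0 \<le> s" and st: "s \<le> t" unfolding s_def using assms t0 by (auto simp: mult_le_cancel_right1)
    have HI: "((\<lambda>x. c * (1 - a*x)^2) has_integral (F s - F 0)) {0..s}"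
    proof (rule fundamental_theorem_of_calculus[OF s0])
      fix x assume "x \<in> {0..s}"
      have "(F has_real_derivative c * (1 - a*x)^2) (at x within {0..s})"
        unfolding F_def by (auto intro!: derivative_eq_intros simp: power2_eq_square field_simps)
      thus "(F has_vector_derivative c * (1 - a*x)^2) (at x within {0..s})"
        by (simp add: has_real_derivative_iff_has_vector_derivative)
    qed
    have "ennreal (F s - F 0) = (\<integral>\<^sup>+x. ennreal (c * (1 - a*x)^2) * indicator {0..s} x \<partial>lborel)"
      using nn_integral_has_integral_lebesgue'[OF _ HI] c0 by simp
    also have "\<dots> \<le> (\<integral>\<^sup>+x. ennreal (D x) * indicator {0..s} x \<partial>lborel)"
    proof (intro nn_integral_mono)
      fix x :: real
      show "ennreal (c * (1 - a*x)^2) * indicator {0..s} x \<le> ennreal (D x) * indicator {0..s} x"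
      proof (cases "x \<in> {0..s}")
        case True
        have "c * (1 - a*x)^2 \<le> D x" using low[of x] True st unfolding a_def by (auto simp: field_simps)
        thus ?thesis using True by (simp add: ennreal_leI)
      qed simp
    qed
    also have "\<dots> = emeasure M (X -` {0..s} \<inter> space M)" using E1 by simp
    finally have L: "ennreal (F s - F 0) \<le> emeasure M (X -` {0..s} \<inter> space M)" .
    have "F s - F 0 = c * s * (1 - 3*\<epsilon>/4 + 3*\<epsilon>^2/16)"
      unfolding F_def a_def s_def using t0 by (simp add: field_simps power2_eq_square power3_eq_cube)
    also have "\<dots> \<ge> c * s * (1/3)"
    proof (intro mult_left_mono)
      show "1/3 \<le> 1 - 3*\<epsilon>/4 + 3*\<epsilon>^2/16" 
      proof -
        have "0 \<le> (4 - 3*\<epsilon>) * (8 - 3*\<epsilon>)" using assms by simp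
        thus ?thesis by (simp add: power2_eq_square algebra_simps)
      qed
      show "0 \<le> c * s" using c0 s0 by simp
    qed
    finally have "c * \<epsilon> * t / 3 \<le> F s - F 0" unfolding s_def by simp
    hence "ennreal (c * \<epsilon> * t / 3) \<le> ennreal (F s - F 0)" by (rule ennreal_leI)
    thus ?thesis using L by simp
  qed
  have "ennreal (\<epsilon>/5) * emeasure M (X -` {0..} \<inter> space M) \<le> ennreal (\<epsilon>/5) * ennreal (c * exp (1/2) * t)"
    using B2 by (intro mult_left_mono) auto
  also have "\<dots> = ennreal (\<epsilon>/5 * (c * exp (1/2) * t))"
    using assms c0 t0 by (intro ennreal_mult[symmetric]) auto
  also have "\<dots> \<le> ennreal (c * \<epsilon> * t / 3)"
  proof (intro ennreal_leI)
    have "\<epsilon>/5 * (c * exp (1/2) * t) = (\<epsilon> * c * t / 5) * exp (1/2)" by simp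
    also have "\<dots> \<le> (\<epsilon> * c * t / 5) * (5/3)"
      using exp_half_le assms c0 t0 by (intro mult_left_mono) auto
    finally show "\<epsilon>/5 * (c * exp (1/2) * t) \<le> c * \<epsilon> * t / 3" by (simp add: mult_ac)
  qed
  also have "\<dots> \<le> emeasure M (X -` {0..s} \<inter> space M)" by (rule B1)
  finally have F: "ennreal (\<epsilon>/5) * emeasure M (X -` {0..} \<inter> space M) \<le> emeasure M (X -` {0..s} \<inter> space M)" .
  have m1: "X -` {0..s} \<inter> space M \<in> sets M" and m2: "X -` {0..} \<inter> space M \<in> sets M"
    using assms(2) unfolding distributed_def by (auto intro: measurable_sets)
  have "ennreal (\<epsilon>/5 * measure M (X -` {0..} \<inter> space M)) \<le> ennreal (measure M (X -` {0..s} \<inter> space M))"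
  proof -
    have "ennreal (\<epsilon>/5) * ennreal (measure M (X -` {0..} \<inter> space M)) \<le> ennreal (measure M (X -` {0..s} \<inter> space M))"
      using F by (simp add: P.emeasure_eq_measure)
    moreover have "ennreal (\<epsilon>/5 * measure M (X -` {0..} \<inter> space M)) = ennreal (\<epsilon>/5) * ennreal (measure M (X -` {0..} \<inter> space M))"
      using assms by (intro ennreal_mult) auto
    ultimately show ?thesis by simp
  qed
  hence "\<epsilon>/5 * measure M (X -` {0..} \<inter> space M) \<le> measure M (X -` {0..s} \<inter> space M)"
    by (subst (asm) ennreal_le_iff) auto
  thus ?thesis unfolding A1 A2 .
qed

end
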